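(* Under the setting in the context, assume that for every $r\in\mathcal U^{(1)}_\varepsilon$ the maximum $\max_{\pi\in\Pi_\rho}J_r(\pi)$ is attained, and let $\Pi_\rho^\star(\mathcal U^{(1)}_\varepsilon):=\bigcup_{r\in\mathcal U^{(1)}_\varepsilon}\arg\max_{\pi\in\Pi_\rho}J_r(\pi)$ and $\mathcal C_{\infty,\mathrm{rel}}(\mathcal U^{(1)}_\varepsilon,\pi;\mu,\mathcal D):=\sup_{\beta\in\Pi_\rho^\star(\mathcal U^{(1)}_\varepsilon)}C_{\infty,\mathrm{rel}}(\beta,\pi;\mu,\mathcal D)$. Suppose the true reward $r^\star\in\mathcal U^{(1)}_\varepsilon$, let $\pi_\rho^\star\in\arg\max_{\pi\in\Pi_\rho}J_{r^\star}(\pi)$, and let $$\pi_\rho^{\mathrm{DRRO}}\in\arg\min_{\pi\in\Pi_\rho}\ \sup_{r\in\mathcal U^{(1)}_\varepsilon}\Big[\max_{\beta\in\Pi_\rho}J_r(\beta)-J_r(\pi)\Big]$$ (assumed to exist). Then $$J_{r^\star}(\pi_\rho^\star)-J_{r^\star}(\pi_\rho^{\mathrm{DRRO}})\le2\varepsilon\,\mathcal C_{\infty,\mathrm{rel}}(\mathcal U^{(1)}_\varepsilon,\pi_\rho^\star;\mu,\mathcal D).$$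
   Context: Setting: prompts $x\sim\mathcal D$ on a space $\mathcal X$; a finite response set $\mathcal Y$; reward functions $r:\mathcal X\times\mathcal Y\to\mathbb R$ (measurable, with the expectations below finite), $r(x)\in\mathbb R^{\mathcal Y}$ the promptwise vector; $\hat r$ a fixed proxy reward. $\Pi_\rho$ is a nonempty set of policies (a local policy class); each $\pi\in\Pi_\rho$ has a bounded measurable linear representation $z_\pi(x)\in\mathbb R^{\mathcal Y}$ (e.g. $z_\pi(x)=\pi(\cdot\mid x)$) with $J_r(\pi)=\mathbb E_{x\sim\mathcal D}[\langle z_\pi(x),r(x)\rangle]$. For each $x$, $\mu_x$ is a probability distribution on $\mathcal Y$ with $\mu_x(y)>0$ for all $y$. Weighted norms: $\|e\|_{1,\mu_x}:=\sum_y\mu_x(y)|e(y)|$, $\|v\|_{\infty,\mu_x^{-1}}:=\max_y|v(y)|/\mu_x(y)$. For $\varepsilon>0$, $\mathcal U^{(1)}_\varepsilon:=\{r:\ \mathbb E_{x\sim\mathcal D}[\|r(x)-\hat r(x)\|_{1,\mu_x}]\le\varepsilon\}$. Relative integrated concentrability: $C_{\infty,\mathrm{rel}}(\beta,\pi;\mu,\mathcal D):=\operatorname{ess\,sup}_{x\sim\mathcal D}\|z_\beta(x)-z_\pi(x)\|_{\infty,\mu_x^{-1}}$. *)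

theory Defs
  imports "HOL-Probability.Probability"
begin

text \<open>Rewards r :: 'x => 'y => real (promptwise vector r x), policies are indices p in a
  policy class with linear representation z p x :: 'y => real; D is the prompt distribution.\<close>

definition Jval :: "'x measure \<Rightarrow> ('p \<Rightarrow> 'x \<Rightarrow> 'y::finite \<Rightarrow> real) \<Rightarrow> ('x \<Rightarrow> 'y \<Rightarrow> real) \<Rightarrow> 'p \<Rightarrow> real" where
  "Jval D z r p = (\<integral>x. (\<Sum>y\<in>UNIV. z p x y * r x y) \<partial>D)"

definition norm1mu :: "('y::finite \<Rightarrow> real) \<Rightarrow> ('y \<Rightarrow> real) \<Rightarrow> real" where
  "norm1mu m e = (\<Sum>y\<in>UNIV. m y * \<bar>e y\<bar>)"

definition norminfmuinv :: "('y::finite \<Rightarrow> real) \<Rightarrow> ('y \<Rightarrow> real) \<Rightarrow> real" where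
  "norminfmuinv m v = (MAX y\<in>UNIV. \<bar>v y\<bar> / m y)"

definition admissible_reward ::
  "'x measure \<Rightarrow> ('x \<Rightarrow> 'y::finite \<Rightarrow> real) \<Rightarrow> ('x \<Rightarrow> 'y \<Rightarrow> real) \<Rightarrow> 'p set \<Rightarrow> ('p \<Rightarrow> 'x \<Rightarrow> 'y \<Rightarrow> real)
     \<Rightarrow> ('x \<Rightarrow> 'y \<Rightarrow> real) \<Rightarrow> bool" where
  "admissible_reward D mu rhat PP z r \<longleftrightarrow>
     (\<forall>y. (\<lambda>x. r x y) \<in> borel_measurable D) \<and>
     integrable D (\<lambda>x. norm1mu (mu x) (\<lambda>y. r x y - rhat x y)) \<and>
     (\<forall>p\<in>PP. integrable D (\<lambda>x. \<Sum>y\<in>UNIV. z p x y * r x y))"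

definition U1 ::
  "'x measure \<Rightarrow> ('x \<Rightarrow> 'y::finite \<Rightarrow> real) \<Rightarrow> ('x \<Rightarrow> 'y \<Rightarrow> real) \<Rightarrow> 'p set \<Rightarrow> ('p \<Rightarrow> 'x \<Rightarrow> 'y \<Rightarrow> real)
     \<Rightarrow> real \<Rightarrow> ('x \<Rightarrow> 'y \<Rightarrow> real) set" where
  "U1 D mu rhat PP z eps = {r. admissible_reward D mu rhat PP z r \<and>
       (\<integral>x. norm1mu (mu x) (\<lambda>y. r x y - rhat x y) \<partial>D) \<le> eps}"

definition is_argmax :: "'p set \<Rightarrow> ('p \<Rightarrow> 'b::linorder) \<Rightarrow> 'p \<Rightarrow> bool" where
  "is_argmax PP f p \<longleftrightarrow> p \<in> PP \<and> (\<forall>q\<in>PP. f q \<le> f p)"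

definition is_argmin :: "'p set \<Rightarrow> ('p \<Rightarrow> 'b::linorder) \<Rightarrow> 'p \<Rightarrow> bool" where
  "is_argmin PP f p \<longleftrightarrow> p \<in> PP \<and> (\<forall>q\<in>PP. f p \<le> f q)"

definition Crel :: "'x measure \<Rightarrow> ('x \<Rightarrow> 'y::finite \<Rightarrow> real) \<Rightarrow> ('p \<Rightarrow> 'x \<Rightarrow> 'y \<Rightarrow> real) \<Rightarrow> 'p \<Rightarrow> 'p \<Rightarrow> ereal" where
  "Crel D mu z b p = esssup D (\<lambda>x. ereal (norminfmuinv (mu x) (\<lambda>y. z b x y - z p x y)))"

definition PiStar :: "'p set \<Rightarrow> ('p \<Rightarrow> 'x \<Rightarrow> 'y::finite \<Rightarrow> real) \<Rightarrow> 'x measure \<Rightarrow> ('x \<Rightarrow> 'y \<Rightarrow> real) set \<Rightarrow> 'p set" where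
  "PiStar PP z D U = (\<Union>r\<in>U. {p. is_argmax PP (Jval D z r) p})"

definition CrelU :: "'x measure \<Rightarrow> ('x \<Rightarrow> 'y::finite \<Rightarrow> real) \<Rightarrow> 'p set \<Rightarrow> ('p \<Rightarrow> 'x \<Rightarrow> 'y \<Rightarrow> real)
     \<Rightarrow> ('x \<Rightarrow> 'y \<Rightarrow> real) set \<Rightarrow> 'p \<Rightarrow> ereal" where
  "CrelU D mu PP z U p = (SUP b\<in>PiStar PP z D U. Crel D mu z b p)"

text \<open>Worst-case regret sup_{r in U} [max_{beta} J_r(beta) - J_r(pi)] (extended real; the max is
  written as a Sup, which equals the max under the attainment hypothesis).\<close>
definition worst_regret :: "'x measure \<Rightarrow> ('p \<Rightarrow> 'x \<Rightarrow> 'y::finite \<Rightarrow> real) \<Rightarrow> 'p set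
     \<Rightarrow> ('x \<Rightarrow> 'y \<Rightarrow> real) set \<Rightarrow> 'p \<Rightarrow> ereal" where
  "worst_regret D z PP U p = (SUP r\<in>U. ereal (Sup (Jval D z r ` PP) - Jval D z r p))"

end

theory Submission
  imports Defs
begin

lemma inner_le_norms:
  fixes d e m :: "'y::finite \<Rightarrow> real"
  assumes m: "\<forall>y. m y > 0"
  shows "(\<Sum>y\<in>UNIV. d y * e y) \<le> norminfmuinv m d * norm1mu m e"
proof -
  let ?N = "norminfmuinv m d"
  have Nge: "\<bar>d y\<bar> / m y \<le> ?N" for y
    unfolding norminfmuinv_def by (rule Max_ge) auto
  have "(\<Sum>y\<in>UNIV. d y * e y) \<le> (\<Sum>y\<in>UNIV. (\<bar>d y\<bar> / m y) * (m y * \<bar>e y\<bar>))"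
  proof (rule sum_mono)
    fix y
    have "d y * e y \<le> \<bar>d y\<bar> * \<bar>e y\<bar>" by (metis abs_ge_self abs_mult)
    also have "\<dots> = (\<bar>d y\<bar> / m y) * (m y * \<bar>e y\<bar>)" using m[rule_format, of y] by simp
    finally show "d y * e y \<le> (\<bar>d y\<bar> / m y) * (m y * \<bar>e y\<bar>)" .
  qed
  also have "\<dots> \<le> (\<Sum>y\<in>UNIV. ?N * (m y * \<bar>e y\<bar>))"
    by (rule sum_mono, rule mult_right_mono[OF Nge]) (meson m abs_ge_zero less_imp_le mult_nonneg_nonneg)
  also have "\<dots> = ?N * norm1mu m e" unfolding norm1mu_def by (simp add: sum_distrib_left)
  finally show ?thesis .
qed

lemma norm1_tri:
  fixes a b c m :: "'y::finite \<Rightarrow> real"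
  assumes m: "\<forall>y. m y > 0"
  shows "norm1mu m (\<lambda>y. a y - b y) \<le> norm1mu m (\<lambda>y. a y - c y) + norm1mu m (\<lambda>y. b y - c y)"
  unfolding norm1mu_def sum.distrib[symmetric]
proof (rule sum_mono)
  fix y
  have "\<bar>a y - b y\<bar> \<le> \<bar>a y - c y\<bar> + \<bar>b y - c y\<bar>" by linarith
  then show "m y * \<bar>a y - b y\<bar> \<le> m y * \<bar>a y - c y\<bar> + m y * \<bar>b y - c y\<bar>"
    using m[rule_format, of y] by (simp add: distrib_left[symmetric] mult_left_mono)
qed

theorem mainTheorem16:
  fixes D :: "'x measure"
    and PP :: "'p set"
    and z :: "'p \<Rightarrow> 'x \<Rightarrow> 'y::finite \<Rightarrow> real"
    and mu :: "'x \<Rightarrow> 'y \<Rightarrow> real"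
    and rhat rstar :: "'x \<Rightarrow> 'y \<Rightarrow> real"
    and eps :: real
    and pistar piD :: 'p
  assumes D: "prob_space D"
    and Pi_ne: "PP \<noteq> {}"
    and z_meas: "\<forall>p\<in>PP. \<forall>y. (\<lambda>x. z p x y) \<in> borel_measurable D"
    and z_bdd: "\<forall>p\<in>PP. \<exists>B. \<forall>x\<in>space D. \<forall>y. \<bar>z p x y\<bar> \<le> B"
    and mu_meas: "\<forall>y. (\<lambda>x. mu x y) \<in> borel_measurable D"
    and mu_pos: "\<forall>x\<in>space D. \<forall>y. mu x y > 0"
    and mu_sum: "\<forall>x\<in>space D. (\<Sum>y\<in>UNIV. mu x y) = 1"
    and rhat_meas: "\<forall>y. (\<lambda>x. rhat x y) \<in> borel_measurable D"
    and eps_pos: "eps > 0"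
    and attained: "\<forall>r\<in>U1 D mu rhat PP z eps. \<exists>p. is_argmax PP (Jval D z r) p"
    and rstar: "rstar \<in> U1 D mu rhat PP z eps"
    and pistar: "is_argmax PP (Jval D z rstar) pistar"
    and piD: "is_argmin PP (worst_regret D z PP (U1 D mu rhat PP z eps)) piD"
  shows "ereal (Jval D z rstar pistar - Jval D z rstar piD)
           \<le> ereal (2 * eps) * CrelU D mu PP z (U1 D mu rhat PP z eps) pistar"
proof -
  interpret prob_space D by (rule D)
  let ?U = "U1 D mu rhat PP z eps"
  let ?J = "Jval D z"
  let ?R = "ereal (2 * eps) * CrelU D mu PP z ?U pistar"
  have pi_in: "pistar \<in> PP" using pistar by (simp add: is_argmax_def)
  have SupJ: "Sup (?J r ` PP) = ?J r b" if "is_argmax PP (?J r) b" for r b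
    using that unfolding is_argmax_def by (intro cSup_eq_maximum) auto
  have step: "ereal (Sup (?J r ` PP) - ?J r pistar) \<le> ?R" if rU: "r \<in> ?U" for r
  proof -
    obtain b where b: "is_argmax PP (?J r) b" using attained rU by blast
    have bP: "b \<in> PP" using b by (simp add: is_argmax_def)
    have bStar: "b \<in> PiStar PP z D ?U" unfolding PiStar_def using rU b by blast
    have CleU: "Crel D mu z b pistar \<le> CrelU D mu PP z ?U pistar"
      unfolding CrelU_def by (rule SUP_upper[OF bStar])
    let ?C = "Crel D mu z b pistar"
    let ?nd = "\<lambda>x. norminfmuinv (mu x) (\<lambda>y. z b x y - z pistar x y)"
    have AEC: "AE x in D. ereal (?nd x) \<le> ?C"
      unfolding Crel_def by (rule esssup_AE)
    show ?thesis
    proof (cases "?C = \<infinity>")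
      case True
      then have "CrelU D mu PP z ?U pistar = \<infinity>" using CleU by simp
      then show ?thesis using eps_pos by simp
    next
      case False
      have "?C \<noteq> -\<infinity>"
      proof
        assume "?C = -\<infinity>"
        then have "AE x in D. False" using AEC by simp
        then show False using AE_False by simp
      qed
      with False obtain c where c: "?C = ereal c" by (cases ?C) auto
      have AEc: "AE x in D. ?nd x \<le> c" using AEC c by simp
      have ra: "admissible_reward D mu rhat PP z r" using rU by (simp add: U1_def)
      have sa: "admissible_reward D mu rhat PP z rstar" using rstar by (simp add: U1_def)
      have re: "(\<integral>x. norm1mu (mu x) (\<lambda>y. r x y - rhat x y) \<partial>D) \<le> eps" using rU by (simp add: U1_def)
      have se: "(\<integral>x. norm1mu (mu x) (\<lambda>y. rstar x y - rhat x y) \<partial>D) \<le> eps" using rstar by (simp add: U1_def)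
      let ?f = "\<lambda>p s x. \<Sum>y\<in>UNIV. z p x y * s x y"
      let ?n1 = "\<lambda>x. norm1mu (mu x) (\<lambda>y. r x y - rhat x y)"
      let ?n2 = "\<lambda>x. norm1mu (mu x) (\<lambda>y. rstar x y - rhat x y)"
      have i1: "integrable D (?f b r)" "integrable D (?f pistar r)"
        using ra bP pi_in by (auto simp: admissible_reward_def)
      have i2: "integrable D (?f b rstar)" "integrable D (?f pistar rstar)"
        using sa bP pi_in by (auto simp: admissible_reward_def)
      have in1: "integrable D ?n1" using ra by (simp add: admissible_reward_def)
      have in2: "integrable D ?n2" using sa by (simp add: admissible_reward_def)
      have jb: "?J rstar b \<le> ?J rstar pistar" using pistar bP by (simp add: is_argmax_def)
      have eq: "?J r b - ?J r pistar - ?J rstar b + ?J rstar pistar =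
          (\<integral>x. ?f b r x - ?f pistar r x - ?f b rstar x + ?f pistar rstar x \<partial>D)"
        using i1 i2 by (simp add: Jval_def)
      have "(\<integral>x. ?f b r x - ?f pistar r x - ?f b rstar x + ?f pistar rstar x \<partial>D)
            \<le> (\<integral>x. c * (?n1 x + ?n2 x) \<partial>D)"
      proof (rule integral_mono_AE)
        show "integrable D (\<lambda>x. ?f b r x - ?f pistar r x - ?f b rstar x + ?f pistar rstar x)"
          using i1 i2 by auto
        show "integrable D (\<lambda>x. c * (?n1 x + ?n2 x))" using in1 in2 by auto
        show "AE x in D. ?f b r x - ?f pistar r x - ?f b rstar x + ?f pistar rstar x
                \<le> c * (?n1 x + ?n2 x)"
          using AEc AE_space
        proof eventually_elim
          case (elim x)
          have mx: "\<forall>y. mu x y > 0" using mu_pos elim by blast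
          have nd0: "0 \<le> ?nd x"
          proof -
            obtain y0 :: 'y where True by simp
            have "0 \<le> \<bar>z b x y0 - z pistar x y0\<bar> / mu x y0" using mx[rule_format, of y0] by simp
            also have "\<dots> \<le> ?nd x" unfolding norminfmuinv_def by (rule Max_ge) auto
            finally show ?thesis .
          qed
          have c0: "0 \<le> c" using nd0 elim by linarith
          have "?f b r x - ?f pistar r x - ?f b rstar x + ?f pistar rstar x
              = (\<Sum>y\<in>UNIV. (z b x y - z pistar x y) * (r x y - rstar x y))"
            by (simp add: sum.distrib[symmetric] sum_subtractf[symmetric] algebra_simps)
          also have "\<dots> \<le> ?nd x * norm1mu (mu x) (\<lambda>y. r x y - rstar x y)"
            by (rule inner_le_norms[OF mx])
          also have "\<dots> \<le> c * norm1mu (mu x) (\<lambda>y. r x y - rstar x y)"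
          proof (rule mult_right_mono)
            show "?nd x \<le> c" using elim by simp
            show "0 \<le> norm1mu (mu x) (\<lambda>y. r x y - rstar x y)"
              unfolding norm1mu_def using mx by (intro sum_nonneg) (simp add: less_imp_le)
          qed
          also have "\<dots> \<le> c * (?n1 x + ?n2 x)"
            by (rule mult_left_mono[OF norm1_tri[OF mx] c0])
          finally show ?case .
        qed
      qed
      also have "\<dots> = c * ((\<integral>x. ?n1 x \<partial>D) + (\<integral>x. ?n2 x \<partial>D))"
        using in1 in2 by simp
      finally have A: "?J r b - ?J r pistar - ?J rstar b + ?J rstar pistar
          \<le> c * ((\<integral>x. ?n1 x \<partial>D) + (\<integral>x. ?n2 x \<partial>D))" using eq by simp
      have "AE x in D. 0 \<le> c"
        using AEc AE_space
      proof eventually_elim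
        case (elim x)
        have mx: "\<forall>y. mu x y > 0" using mu_pos elim by blast
        obtain y0 :: 'y where True by simp
        have "0 \<le> \<bar>z b x y0 - z pistar x y0\<bar> / mu x y0" using mx[rule_format, of y0] by simp
        also have "\<dots> \<le> ?nd x" unfolding norminfmuinv_def by (rule Max_ge) auto
        finally show ?case using elim by linarith
      qed
      then have c0: "0 \<le> c" by (simp add: AE_const)
      have "c * ((\<integral>x. ?n1 x \<partial>D) + (\<integral>x. ?n2 x \<partial>D)) \<le> c * (2 * eps)"
        using re se c0 by (intro mult_left_mono) auto
      with A jb have B: "?J r b - ?J r pistar \<le> 2 * eps * c" by (simp add: mult.commute[of c])
      have "ereal (Sup (?J r ` PP) - ?J r pistar) = ereal (?J r b - ?J r pistar)"
        using SupJ[OF b] by simp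
      also have "\<dots> \<le> ereal (2 * eps) * ?C" using B c by simp
      also have "\<dots> \<le> ?R"
        by (rule ereal_mult_left_mono[OF CleU]) (use eps_pos in simp)
      finally show ?thesis .
    qed
  qed
  have piDP: "piD \<in> PP" using piD by (simp add: is_argmin_def)
  have "ereal (?J rstar pistar - ?J rstar piD) = ereal (Sup (?J rstar ` PP) - ?J rstar piD)"
    using SupJ[OF pistar] by simp
  also have "\<dots> \<le> worst_regret D z PP ?U piD"
    unfolding worst_regret_def by (rule SUP_upper[OF rstar])
  also have "\<dots> \<le> worst_regret D z PP ?U pistar"
    using piD pi_in by (simp add: is_argmin_def)
  also have "\<dots> \<le> ?R"
    unfolding worst_regret_def by (rule SUP_least) (rule step)
  finally show ?thesis .
qed

end
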